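(* Let $\nu\ge1/2$ and $b,\theta>0$ be fixed. As $\delta\to0$, $$\int_{-\pi}^{\pi}a^\delta_{b,\theta}(\lambda)\,d\lambda\sim(\delta\theta)^{\frac{2\nu}{2\nu+1}}(2\pi C_\nu b)^{\frac1{2\nu+1}}\int_{-\infty}^{\infty}\big(1+|x|^{2\nu+1}\big)^{-1}dx,$$ $$\int_{-\pi}^{\pi}\big[a^\delta_{b,\theta}(\lambda)\big]^2d\lambda\sim(\delta\theta)^{\frac{2\nu}{2\nu+1}}(2\pi C_\nu b)^{\frac1{2\nu+1}}\int_{-\infty}^{\infty}\big(1+|x|^{2\nu+1}\big)^{-2}dx.$$
   Context: For $\alpha>0$, $\omega\in\mathbb R$ let $g^*_{\nu,\alpha}(\omega)=C_\nu\alpha^{2\nu}(\alpha^2+\omega^2)^{-(\nu+1/2)}$ with $C_\nu=\Gamma(\nu+\frac12)/(\sqrt\pi\,\Gamma(\nu))$. For $\delta,\theta>0$ and $\lambda\in[-\pi,\pi]$ let $g^\delta_{\nu,\theta}(\lambda)=\sum_{k\in\mathbb Z}g^*_{\nu,\delta\theta}(\lambda+2k\pi)$, and for $b>0$, $a^\delta_{b,\theta}=\dfrac{b\,g^\delta_{\nu,\theta}}{b\,g^\delta_{\nu,\theta}+(2\pi)^{-1}}$. "$\sim$" means the ratio tends to $1$. *)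

theory Defs
  imports "HOL-Analysis.Analysis" "HOL-Library.Landau_Symbols"
begin

definition C_nu :: "real \<Rightarrow> real" where
  "C_nu \<nu> = Gamma (\<nu> + 1/2) / (sqrt pi * Gamma \<nu>)"

definition gstar :: "real \<Rightarrow> real \<Rightarrow> real \<Rightarrow> real" where
  "gstar \<nu> \<alpha> \<omega> = C_nu \<nu> * \<alpha> powr (2*\<nu>) * (\<alpha>^2 + \<omega>^2) powr (-(\<nu> + 1/2))"

definition gdelta :: "real \<Rightarrow> real \<Rightarrow> real \<Rightarrow> real \<Rightarrow> real" where
  "gdelta \<nu> \<delta> \<theta> l = (\<Sum>\<^sub>\<infinity>k\<in>(UNIV::int set). gstar \<nu> (\<delta>*\<theta>) (l + 2 * of_int k * pi))"

definition adelta :: "real \<Rightarrow> real \<Rightarrow> real \<Rightarrow> real \<Rightarrow> real \<Rightarrow> real" where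
  "adelta \<nu> \<delta> b \<theta> l = b * gdelta \<nu> \<delta> \<theta> l / (b * gdelta \<nu> \<delta> \<theta> l + 1 / (2*pi))"

end

theory Submission
  imports Defs "HOL-Probability.Sinc_Integral"
begin


lemma C_nu_pos: "\<nu> > 0 \<Longrightarrow> C_nu \<nu> > 0"
  unfolding C_nu_def by (intro divide_pos_pos mult_pos_pos Gamma_real_pos) auto

lemma summable_nat_inv_sq: "(\<lambda>n::nat. 1 / (real n)^2) summable_on UNIV"
proof -
  have "summable (\<lambda>n::nat. inverse (real n ^ 2))"
    by (rule inverse_power_summable) auto
  then show ?thesis
    by (subst summable_on_UNIV_nonneg_real_iff) (auto simp: divide_inverse)
qed

lemma summable_Z: "(\<lambda>k::int. 1 / (of_int k)^2 :: real) summable_on UNIV"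
proof -
  have U: "(UNIV::int set) = range int \<union> range (\<lambda>n. - int n)"
    by (auto simp: image_iff) (metis minus_minus nonneg_int_cases neg_0_le_iff_le linorder_le_cases)
  have 1: "(\<lambda>k::int. 1 / (of_int k)^2 :: real) summable_on range int"
    by (subst summable_on_reindex) (auto simp: o_def summable_nat_inv_sq)
  have 2: "(\<lambda>k::int. 1 / (of_int k)^2 :: real) summable_on range (\<lambda>n. - int n)"
    by (subst summable_on_reindex) (auto simp: o_def summable_nat_inv_sq inj_on_def)
  show ?thesis unfolding U by (rule summable_on_union[OF 1 2])
qed

lemma filterlim_int_intervals:
  "filterlim (\<lambda>N::nat. {-int N..int N}) (finite_subsets_at_top (UNIV::int set)) sequentially"
  unfolding filterlim_finite_subsets_at_top
proof (safe, goal_cases)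
  case (1 X)
  then obtain n where n: "\<forall>x\<in>X. \<bar>x\<bar> \<le> n"
    using finite_int_iff_bounded_le by (metis finite_imageI Max_ge finite_imageI image_eqI) 
  show ?case using eventually_ge_at_top[of "nat n"]
    by eventually_elim (insert n, force)
qed

lemma infsum_int_partial:
  fixes f :: "int \<Rightarrow> real"
  assumes "f summable_on UNIV"
  shows "(\<lambda>N::nat. sum f {-int N..int N}) \<longlonglongrightarrow> infsum f UNIV"
proof -
  have "(sum f \<longlongrightarrow> infsum f UNIV) (finite_subsets_at_top UNIV)"
    using assms unfolding summable_iff_has_sum_infsum has_sum_def .
  from filterlim_compose[OF this filterlim_int_intervals] show ?thesis by (simp add: o_def)
qed



lemma gstar_nonneg: "\<alpha> > 0 \<Longrightarrow> \<nu> > 0 \<Longrightarrow> gstar \<nu> \<alpha> \<omega> \<ge> 0"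
  unfolding gstar_def using C_nu_pos[of \<nu>] by auto

lemma gstar_tail:
  fixes \<nu> \<alpha> l :: real and k :: int
  assumes nu: "\<nu> \<ge> 1/2" and a: "\<alpha> > 0" and l: "\<bar>l\<bar> \<le> pi" and k: "k \<noteq> 0"
  shows "gstar \<nu> \<alpha> (l + 2 * of_int k * pi) \<le> C_nu \<nu> * \<alpha> powr (2*\<nu>) * (1 / (of_int k)^2)"
proof -
  define \<omega> where "\<omega> = l + 2 * of_int k * pi"
  have k1: "\<bar>real_of_int k\<bar> \<ge> 1" using k by linarith
  have "\<bar>2 * of_int k * pi\<bar> = 2 * \<bar>real_of_int k\<bar> * pi" by (simp add: abs_mult)
  moreover have "\<bar>real_of_int k\<bar> * pi \<ge> 1 * pi" by (rule mult_right_mono) (use k1 in auto)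
  moreover have "2 * \<bar>real_of_int k\<bar> * pi = \<bar>real_of_int k\<bar> * pi + \<bar>real_of_int k\<bar> * pi" by simp
  ultimately have w: "\<bar>\<omega>\<bar> \<ge> \<bar>real_of_int k\<bar> * pi" unfolding \<omega>_def using l by linarith
  have kp: "\<bar>real_of_int k\<bar> * pi \<ge> \<bar>real_of_int k\<bar> * 1" by (rule mult_left_mono) (use pi_gt3 in auto)
  have w1: "\<bar>\<omega>\<bar> \<ge> 1" using w kp k1 by linarith
  have sq: "\<omega>^2 \<ge> (of_int k)^2"
  proof -
    have "\<bar>real_of_int k\<bar> \<le> \<bar>\<omega>\<bar>" using w kp by linarith
    then have "\<bar>real_of_int k\<bar>^2 \<le> \<bar>\<omega>\<bar>^2" by (rule power_mono) simp
    then show ?thesis by simp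
  qed
  have w2: "\<omega>^2 \<ge> 1" using w1 by (metis abs_ge_self le_less_trans one_le_power power2_abs not_le order.trans)
  have "(\<alpha>^2 + \<omega>^2) powr (-(\<nu>+1/2)) \<le> (\<omega>^2) powr (-(\<nu>+1/2))"
    by (rule powr_mono2') (use nu w2 in auto)
  also have "\<dots> \<le> (\<omega>^2) powr (-1)"
    by (rule powr_mono) (use nu w2 in auto)
  also have "\<dots> = 1 / \<omega>^2" using w2 by (simp add: powr_minus divide_inverse)
  also have "\<dots> \<le> 1 / (of_int k)^2"
    by (rule divide_left_mono) (use sq k w2 in \<open>auto intro!: mult_pos_pos\<close>)
  finally have *: "(\<alpha>^2 + \<omega>^2) powr (-(\<nu>+1/2)) \<le> 1 / (of_int k)^2" .
  have c: "C_nu \<nu> * \<alpha> powr (2*\<nu>) \<ge> 0" using C_nu_pos[of \<nu>] nu by auto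
  show ?thesis
    unfolding gstar_def \<omega>_def[symmetric]
    using mult_left_mono[OF * c] by (simp add: mult.assoc)
qed

definition Zc :: real where "Zc = infsum (\<lambda>k::int. 1 / (of_int k)^2) UNIV"

lemma gdelta_bounds:
  fixes \<nu> \<delta> \<theta> l :: real
  assumes nu: "\<nu> \<ge> 1/2" and a: "\<delta>*\<theta> > 0" and l: "\<bar>l\<bar> \<le> pi"
  shows "(\<lambda>k::int. gstar \<nu> (\<delta>*\<theta>) (l + 2 * of_int k * pi)) summable_on UNIV"
    and "gstar \<nu> (\<delta>*\<theta>) l \<le> gdelta \<nu> \<delta> \<theta> l"
    and "gdelta \<nu> \<delta> \<theta> l \<le> gstar \<nu> (\<delta>*\<theta>) l + C_nu \<nu> * (\<delta>*\<theta>) powr (2*\<nu>) * Zc"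
proof -
  define \<alpha> where "\<alpha> = \<delta>*\<theta>"
  have a': "\<alpha> > 0" using a \<alpha>_def by simp
  define f where "f = (\<lambda>k::int. gstar \<nu> \<alpha> (l + 2 * of_int k * pi))"
  define c where "c = C_nu \<nu> * \<alpha> powr (2*\<nu>)"
  define d where "d = (\<lambda>k::int. (if k = 0 then gstar \<nu> \<alpha> l else 0) + c * (1 / (of_int k)^2))"
  have s1: "(\<lambda>k::int. if k = 0 then gstar \<nu> \<alpha> l else 0) summable_on UNIV"
    by (rule finite_nonzero_values_imp_summable_on) auto
  have s2: "(\<lambda>k::int. c * (1 / (of_int k)^2)) summable_on UNIV"
    by (rule summable_on_cmult_right[OF summable_Z])
  have ds: "d summable_on UNIV" unfolding d_def by (rule summable_on_add[OF s1 s2])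
  have fd: "f k \<le> d k" for k
  proof (cases "k = 0")
    case True then show ?thesis by (simp add: f_def d_def)
  next
    case False then show ?thesis
      using gstar_tail[OF nu a' l False] by (simp add: f_def d_def c_def)
  qed
  have f0: "f k \<ge> 0" for k unfolding f_def using gstar_nonneg[OF a'] nu by auto
  have fs: "f summable_on UNIV" by (rule summable_on_comparison_test[OF ds]) (use fd f0 in auto)
  then show "(\<lambda>k::int. gstar \<nu> (\<delta>*\<theta>) (l + 2 * of_int k * pi)) summable_on UNIV"
    by (simp add: f_def \<alpha>_def)
  have gd: "gdelta \<nu> \<delta> \<theta> l = infsum f UNIV" by (simp add: gdelta_def f_def \<alpha>_def)
  have "sum f {0} \<le> infsum f UNIV"
    by (rule finite_sum_le_infsum[OF fs]) (use f0 in auto)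
  then show "gstar \<nu> (\<delta>*\<theta>) l \<le> gdelta \<nu> \<delta> \<theta> l" by (simp add: gd f_def \<alpha>_def)
  have "infsum f UNIV \<le> infsum d UNIV" by (rule infsum_mono[OF fs ds fd])
  also have "infsum d UNIV = infsum (\<lambda>k::int. if k = 0 then gstar \<nu> \<alpha> l else 0) UNIV + infsum (\<lambda>k::int. c * (1 / (of_int k)^2)) UNIV"
    unfolding d_def by (rule infsum_add[OF s1 s2])
  also have "infsum (\<lambda>k::int. if k = 0 then gstar \<nu> \<alpha> l else 0) UNIV = infsum (\<lambda>k::int. if k = 0 then gstar \<nu> \<alpha> l else 0) {0}"
    by (rule infsum_cong_neutral) auto
  also have "infsum (\<lambda>k::int. c * (1 / (of_int k)^2)) UNIV = c * Zc"
    unfolding Zc_def by (rule infsum_cmult_right[OF summable_Z])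
  finally show "gdelta \<nu> \<delta> \<theta> l \<le> gstar \<nu> (\<delta>*\<theta>) l + C_nu \<nu> * (\<delta>*\<theta>) powr (2*\<nu>) * Zc"
    by (simp add: gd c_def \<alpha>_def)
qed



definition phi :: "real \<Rightarrow> real" where "phi t = t / (1 + t)"

lemma phi_nonneg: "t \<ge> 0 \<Longrightarrow> phi t \<ge> 0" by (simp add: phi_def)
lemma phi_le1: "t \<ge> 0 \<Longrightarrow> phi t \<le> 1" by (simp add: phi_def)
lemma phi_mono: "0 \<le> t \<Longrightarrow> t \<le> u \<Longrightarrow> phi t \<le> phi u"
  by (simp add: phi_def divide_simps) (simp add: algebra_simps)
lemma phi_lip: "0 \<le> t \<Longrightarrow> t \<le> u \<Longrightarrow> phi u - phi t \<le> u - t"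
proof -
  assume a: "0 \<le> t" "t \<le> u"
  have "phi u - phi t = (u - t) / ((1+u)*(1+t))" using a by (simp add: phi_def divide_simps) (simp add: algebra_simps)
  also have "\<dots> \<le> (u - t) / 1" proof (rule divide_left_mono)
    have "(1+u)*(1+t) \<ge> 1*1" by (rule mult_mono) (use a in auto)
    then show "1 \<le> (1+u)*(1+t)" by simp
  qed (use a in \<open>auto intro!: mult_pos_pos\<close>)
  finally show ?thesis by simp
qed

lemma pow_lip: "0 \<le> y \<Longrightarrow> y \<le> x \<Longrightarrow> x \<le> (1::real) \<Longrightarrow> x^n - y^n \<le> real n * (x - y)"
proof (induction n)
  case 0 then show ?case by simp
next
  case (Suc n)
  have "x^Suc n - y^Suc n = x * (x^n - y^n) + y^n * (x - y)" by (simp add: algebra_simps)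
  also have "x * (x^n - y^n) \<le> 1 * (x^n - y^n)"
    by (rule mult_right_mono) (use Suc.prems in \<open>auto intro: power_mono\<close>)
  also have "y^n * (x - y) \<le> 1 * (x - y)"
    by (rule mult_right_mono) (use Suc.prems in \<open>auto intro: power_le_one\<close>)
  finally show ?case using Suc by (simp add: algebra_simps)
qed

lemma adelta_phi: "b > 0 \<Longrightarrow> gdelta \<nu> \<delta> \<theta> l \<ge> 0 \<Longrightarrow> adelta \<nu> \<delta> b \<theta> l = phi (2*pi*b*gdelta \<nu> \<delta> \<theta> l)"
  unfolding adelta_def phi_def by (simp add: field_simps)

lemma gdelta_meas:
  assumes nu: "\<nu> \<ge> 1/2" and a: "\<delta>*\<theta> > 0"
  shows "gdelta \<nu> \<delta> \<theta> \<in> borel_measurable (lebesgue_on {-pi..pi})"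
proof (rule borel_measurable_LIMSEQ_real)
  fix x assume "x \<in> space (lebesgue_on {-pi..pi})"
  then have "\<bar>x\<bar> \<le> pi" by auto
  from infsum_int_partial[OF gdelta_bounds(1)[OF nu a this]]
  show "(\<lambda>N. \<Sum>k\<in>{-int N..int N}. gstar \<nu> (\<delta>*\<theta>) (x + 2 * of_int k * pi)) \<longlonglongrightarrow> gdelta \<nu> \<delta> \<theta> x"
    by (simp add: gdelta_def)
next
  fix N :: nat
  show "(\<lambda>x. \<Sum>k\<in>{-int N..int N}. gstar \<nu> (\<delta>*\<theta>) (x + 2 * of_int k * pi)) \<in> borel_measurable (lebesgue_on {-pi..pi})"
    by (rule continuous_imp_measurable_on_sets_lebesgue)
      (use a in \<open>auto simp: gstar_def intro!: continuous_intros\<close>)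
qed

lemma a_approx:
  fixes n :: nat
  assumes nu: "\<nu> \<ge> 1/2" and b: "b > 0" and a: "\<delta>*\<theta> > 0"
  shows "\<bar>integral {-pi..pi} (\<lambda>l. adelta \<nu> \<delta> b \<theta> l ^ n) - integral {-pi..pi} (\<lambda>l. phi (2*pi*b*gstar \<nu> (\<delta>*\<theta>) l) ^ n)\<bar>
         \<le> 2*pi*(real n * (2*pi*b*(C_nu \<nu> * (\<delta>*\<theta>) powr (2*\<nu>) * Zc)))"
proof -
  define S where "S = {-pi..pi}"
  define E where "E = real n * (2*pi*b*(C_nu \<nu> * (\<delta>*\<theta>) powr (2*\<nu>) * Zc))"
  define f where "f = (\<lambda>l. adelta \<nu> \<delta> b \<theta> l ^ n)"
  define g where "g = (\<lambda>l. phi (2*pi*b*gstar \<nu> (\<delta>*\<theta>) l) ^ n)"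
  have pt: "0 \<le> f l - g l \<and> f l - g l \<le> E \<and> \<bar>f l\<bar> \<le> 1" if l: "l \<in> S" for l
  proof -
    have l': "\<bar>l\<bar> \<le> pi" using l by (auto simp: S_def)
    define g0 where "g0 = gstar \<nu> (\<delta>*\<theta>) l"
    define gd where "gd = gdelta \<nu> \<delta> \<theta> l"
    have g00: "g0 \<ge> 0" unfolding g0_def using gstar_nonneg[OF a] nu by auto
    have lo: "g0 \<le> gd" and hi: "gd \<le> g0 + C_nu \<nu> * (\<delta>*\<theta>) powr (2*\<nu>) * Zc"
      using gdelta_bounds(2,3)[OF nu a l'] by (auto simp: g0_def gd_def)
    have c: "0 \<le> 2*pi*b" using b by simp
    define t where "t = 2*pi*b*g0"
    define u where "u = 2*pi*b*gd"
    have t0: "0 \<le> t" unfolding t_def using g00 b by simp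
    have tu: "t \<le> u" unfolding t_def u_def using mult_left_mono[OF lo c] .
    have ut: "u - t \<le> 2*pi*b*(C_nu \<nu> * (\<delta>*\<theta>) powr (2*\<nu>) * Zc)"
      unfolding t_def u_def using mult_left_mono[OF hi c] by (simp add: algebra_simps)
    have fa: "f l = phi u ^ n" unfolding f_def u_def gd_def
      by (subst adelta_phi[OF b]) (use g00 lo in \<open>auto simp: gd_def\<close>)
    have ga: "g l = phi t ^ n" unfolding g_def t_def g0_def ..
    have p1: "phi t \<le> phi u" by (rule phi_mono[OF t0 tu])
    have p0: "0 \<le> phi t" by (rule phi_nonneg[OF t0])
    have pu: "phi u \<le> 1" by (rule phi_le1) (use t0 tu in auto)
    have "phi u ^ n - phi t ^ n \<le> real n * (phi u - phi t)" by (rule pow_lip[OF p0 p1 pu])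
    also have "\<dots> \<le> real n * (u - t)" by (rule mult_left_mono[OF phi_lip[OF t0 tu]]) simp
    also have "\<dots> \<le> E" unfolding E_def by (rule mult_left_mono[OF ut]) simp
    finally have "phi u ^ n - phi t ^ n \<le> E" .
    moreover have "phi t ^ n \<le> phi u ^ n" by (rule power_mono[OF p1 p0])
    moreover have "\<bar>phi u ^ n\<bar> \<le> 1" using p0 p1 pu by (simp add: abs_le_iff power_le_one)
    ultimately show ?thesis using fa ga by simp
  qed
  have gm: "gdelta \<nu> \<delta> \<theta> \<in> borel_measurable (lebesgue_on S)"
    unfolding S_def by (rule gdelta_meas[OF nu a])
  have fm: "f \<in> borel_measurable (lebesgue_on S)"
    unfolding f_def adelta_def
    by (intro borel_measurable_power borel_measurable_divide borel_measurable_add borel_measurable_times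
        borel_measurable_const gm)
  have fi: "f integrable_on S"
    by (rule measurable_bounded_by_integrable_imp_integrable_real[OF fm, of "\<lambda>_. 1"])
       (use pt in \<open>auto simp: S_def\<close>)
  have gi: "g integrable_on S"
    unfolding S_def g_def phi_def gstar_def
    by (rule integrable_continuous_interval)
       (use a nu C_nu_pos[of \<nu>] b in \<open>auto intro!: continuous_intros simp: add_nonneg_eq_0_iff\<close>)
  have dint: "(\<lambda>l. f l - g l) integrable_on S" using fi gi by (rule integrable_diff)
  have eq: "integral S f - integral S g = integral S (\<lambda>l. f l - g l)"
    using integral_diff[OF fi gi] by simp
  have "integral S (\<lambda>l. f l - g l) \<ge> 0"
    by (rule integral_nonneg[OF dint]) (use pt in auto)
  moreover have "integral S (\<lambda>l. f l - g l) \<le> integral S (\<lambda>l. E)"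
    by (rule integral_le[OF dint]) (use pt in \<open>auto simp: S_def\<close>)
  moreover have "integral S (\<lambda>l. E) = 2*pi*E" by (simp add: S_def)
  ultimately have "0 \<le> integral S f - integral S g" "integral S f - integral S g \<le> 2*pi*E"
    using eq by linarith+
  then have "\<bar>integral S f - integral S g\<bar> \<le> 2*pi*E" by linarith
  then show ?thesis unfolding S_def f_def g_def E_def .
qed



definition hfun :: "real \<Rightarrow> real \<Rightarrow> real \<Rightarrow> real" where
  "hfun p e x = 1 / (1 + (e^2 + x^2) powr (p/2))"

lemma img_div: "s > 0 \<Longrightarrow> (\<lambda>x. x / s) ` {a..b} = {a/s..b/(s::real)}"
proof -
  assume s: "s > 0"
  have "(\<lambda>x. x / s) ` {a..b} = (\<lambda>x. inverse s * x + 0) ` {a..b}" by (simp add: divide_inverse mult.commute)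
  also have "\<dots> = {a/s..b/s}" using s by (subst image_affinity_atLeastAtMost) (auto simp: divide_inverse mult.commute)
  finally show ?thesis .
qed

lemma phi_scaled:
  fixes \<nu> \<alpha> K s x :: real
  assumes nu: "\<nu> > 0" and a: "\<alpha> > 0" and K: "K > 0"
    and sdef: "s = (K * \<alpha> powr (2*\<nu>)) powr (1/(2*\<nu>+1))"
  shows "phi (K * \<alpha> powr (2*\<nu>) * (\<alpha>^2 + (s*x)^2) powr (-(\<nu>+1/2))) = hfun (2*\<nu>+1) (\<alpha>/s) x"
proof -
  define p where "p = 2*\<nu>+1"
  have p: "p > 0" using nu p_def by simp
  have s: "s > 0" using sdef a K by simp
  have sp: "s powr p = K * \<alpha> powr (2*\<nu>)"
    using a K p by (simp add: sdef p_def[symmetric] powr_powr)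
  have s2: "(s^2) powr (p/2) = s powr p"
  proof -
    have "s^2 = s powr 2" using s by (simp add: powr_realpow)
    then show ?thesis by (simp add: powr_powr)
  qed
  define A where "A = \<alpha>^2 + (s*x)^2"
  have A: "A > 0" unfolding A_def using a by (simp add: add_pos_nonneg)
  have AA: "A / s^2 = (\<alpha>/s)^2 + x^2" unfolding A_def using s by (simp add: field_simps power2_eq_square)
  have q: "-(\<nu>+1/2) = -(p/2)" by (simp add: p_def field_simps)
  define m where "m = K * \<alpha> powr (2*\<nu>) * A powr (-(p/2))"
  have m: "m = s powr p / A powr (p/2)" unfolding m_def sp[symmetric] powr_minus divide_inverse ..
  have mpos: "m > 0" using m s A by simp
  have im: "1/m = (A/s^2) powr (p/2)"
    using s A by (simp add: m powr_divide s2)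
  have "phi m = 1 / (1 + 1/m)" using mpos unfolding phi_def by (simp add: field_simps)
  also have "\<dots> = hfun p (\<alpha>/s) x" unfolding im AA hfun_def ..
  finally show ?thesis unfolding m_def A_def q p_def .
qed

lemma subst_main:
  fixes \<nu> \<alpha> b s :: real and n :: nat
  assumes nu: "\<nu> > 0" and a: "\<alpha> > 0" and b: "b > 0"
    and sdef: "s = (2*pi*C_nu \<nu>*b * \<alpha> powr (2*\<nu>)) powr (1/(2*\<nu>+1))"
  shows "integral {-pi..pi} (\<lambda>l. phi (2*pi*b*gstar \<nu> \<alpha> l) ^ n)
        = s * integral {-pi/s..pi/s} (\<lambda>x. hfun (2*\<nu>+1) (\<alpha>/s) x ^ n)"
proof -
  define K where "K = 2*pi*C_nu \<nu>*b"
  have K: "K > 0" unfolding K_def using C_nu_pos[OF nu] b by simp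
  have s: "s > 0" using sdef a K K_def C_nu_pos[OF nu] b by simp
  define F where "F = (\<lambda>l. phi (2*pi*b*gstar \<nu> \<alpha> l) ^ n)"
  have Fs: "F (s*x) = hfun (2*\<nu>+1) (\<alpha>/s) x ^ n" for x
  proof -
    have "2*pi*b*gstar \<nu> \<alpha> (s*x) = K * \<alpha> powr (2*\<nu>) * (\<alpha>^2 + (s*x)^2) powr (-(\<nu>+1/2))"
      unfolding gstar_def K_def by (simp add: mult_ac)
    then show ?thesis unfolding F_def using phi_scaled[OF nu a K sdef[folded K_def], of x] by (simp only:)
  qed
  have "integral ((\<lambda>x. x / s) ` {-pi..pi}) (\<lambda>x. F (s * x)) = (1 / \<bar>s\<bar>) *\<^sub>R integral {-pi..pi} F"
    by (rule integral_stretch_real) (use s in auto)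
  then have "integral {-pi/s..pi/s} (\<lambda>x. hfun (2*\<nu>+1) (\<alpha>/s) x ^ n) = (1/s) * integral {-pi..pi} F"
    using s by (simp add: img_div Fs)
  then show ?thesis using s unfolding F_def by (simp add: field_simps)
qed



lemma inv1: "z \<ge> 0 \<Longrightarrow> 1/(1+z) \<le> (1::real)" by (simp add: divide_le_eq)
lemma invmono: "0 \<le> z \<Longrightarrow> z \<le> z' \<Longrightarrow> 1/(1+z') \<le> 1/(1+(z::real))"
  by (rule divide_left_mono) (auto intro!: mult_pos_pos)

lemma hfun_nonneg: "hfun p e x \<ge> 0" unfolding hfun_def by simp
lemma hfun_le1: "hfun p e x \<le> 1" unfolding hfun_def by (rule inv1) simp
lemma hfun_mono: "p \<ge> 0 \<Longrightarrow> hfun p e x \<le> hfun p 0 x"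
  unfolding hfun_def
  by (rule invmono) (auto intro!: powr_mono2)

lemma hfun_dom: "p \<ge> 2 \<Longrightarrow> hfun p 0 x \<le> 2 * inverse (1 + x^2)"
proof -
  assume p: "p \<ge> 2"
  show ?thesis
  proof (cases "x^2 \<ge> 1")
    case True
    have "(x^2) powr 1 \<le> (x^2) powr (p/2)" by (rule powr_mono) (use p True in auto)
    then have "x^2 \<le> (x^2) powr (p/2)" using True by simp
    then have "hfun p 0 x \<le> 1 / (1 + x^2)" unfolding hfun_def
      by (intro invmono) auto
    also have "\<dots> \<le> 2 * inverse (1 + x^2)" by (simp add: divide_inverse add_pos_nonneg)
    finally show ?thesis .
  next
    case False
    have h1: "1 + x^2 \<le> 2" "0 < 1 + x^2" using False by (auto intro: add_pos_nonneg)
    have "1 \<le> 2 * inverse (1 + x^2)" using h1 by (simp add: le_divide_eq divide_inverse[symmetric])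
    then show ?thesis using hfun_le1[of p 0 x] by linarith
  qed
qed

lemma integrable_w: "integrable lborel (\<lambda>x::real. 2 * inverse (1 + x^2))"
proof -
  have "integrable lborel (\<lambda>x::real. inverse (1 + x^2))"
    using integrable_inverse_1_plus_square unfolding set_integrable_def einterval_eq_UNIV by simp
  then show ?thesis by (rule integrable_mult_right)
qed

lemma hfun_meas: "(\<lambda>x. hfun p e x ^ n) \<in> borel_measurable borel"
  unfolding hfun_def by measurable

lemma dct_at_top:
  fixes p :: real and n :: nat and \<epsilon> T :: "real \<Rightarrow> real"
  assumes p: "p \<ge> 2" and n: "n \<ge> 1" and e: "(\<epsilon> \<longlongrightarrow> 0) at_top" and T: "filterlim T at_top at_top"
  shows "((\<lambda>t. integral {-T t..T t} (\<lambda>x. hfun p (\<epsilon> t) x ^ n)) \<longlongrightarrow> integral UNIV (\<lambda>x. hfun p 0 x ^ n)) at_top"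
proof -
  define s where "s = (\<lambda>t x. indicator {-T t..T t} x * hfun p (\<epsilon> t) x ^ n)"
  define f where "f = (\<lambda>x. hfun p 0 x ^ n)"
  define w where "w = (\<lambda>x::real. 2 * inverse (1 + x^2))"
  have fm: "f \<in> borel_measurable lborel" unfolding f_def using hfun_meas by simp
  have sm: "s t \<in> borel_measurable lborel" for t
    unfolding s_def using hfun_meas[of p "\<epsilon> t" n] by measurable
  have wi: "integrable lborel w" unfolding w_def by (rule integrable_w)
  have bnd: "norm (s t x) \<le> w x" for t x
  proof -
    have "\<bar>s t x\<bar> \<le> hfun p (\<epsilon> t) x ^ n"
      unfolding s_def by (auto simp: indicator_def hfun_nonneg)
    also have "\<dots> \<le> hfun p (\<epsilon> t) x ^ 1"
      by (rule power_decreasing) (use n hfun_nonneg hfun_le1 in auto)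
    also have "\<dots> \<le> hfun p 0 x" using hfun_mono[of p] p by simp
    also have "\<dots> \<le> w x" unfolding w_def by (rule hfun_dom[OF p])
    finally show ?thesis by simp
  qed
  have lim: "((\<lambda>t. s t x) \<longlongrightarrow> f x) at_top" for x
  proof -
    have ev: "eventually (\<lambda>t. s t x = hfun p (\<epsilon> t) x ^ n) at_top"
      using filterlim_at_top[THEN iffD1, OF T, rule_format, of "\<bar>x\<bar>"]
      by eventually_elim (auto simp: s_def indicator_def)
    have *: "((\<lambda>t. hfun p (\<epsilon> t) x ^ n) \<longlongrightarrow> hfun p 0 x ^ n) at_top"
      unfolding hfun_def using p
      by (intro tendsto_intros e) (auto intro!: always_eventually add_nonneg_nonneg simp: add_nonneg_eq_0_iff)
    show ?thesis unfolding f_def using tendsto_cong[OF ev] * by simp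
  qed
  have L: "((\<lambda>t. integral\<^sup>L lborel (s t)) \<longlongrightarrow> integral\<^sup>L lborel f) at_top"
    by (rule integral_dominated_convergence_at_top[OF fm sm wi])
       (use lim bnd in auto)
  have fi: "integrable lborel f"
    by (rule integrable_dominated_convergence_at_top[where s=s, OF fm sm wi])
       (use lim bnd in auto)
  have si: "integrable lborel (s t)" for t
    by (rule Bochner_Integration.integrable_bound[OF wi sm]) (use bnd in \<open>auto intro!: AE_I2 order.trans[OF _ abs_ge_self]\<close>)
  have "integral\<^sup>L lborel (s t) = integral {-T t..T t} (\<lambda>x. hfun p (\<epsilon> t) x ^ n)" for t
  proof -
    have "integral\<^sup>L lborel (s t) = integral UNIV (s t)"
      using has_integral_integral_lborel[OF si[of t]] by (simp add: has_integral_iff)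
    also have "\<dots> = integral UNIV (\<lambda>x. if x \<in> {-T t..T t} then hfun p (\<epsilon> t) x ^ n else 0)"
      unfolding s_def by (rule arg_cong[where f="integral UNIV"]) (auto simp: indicator_def)
    also have "\<dots> = integral {-T t..T t} (\<lambda>x. hfun p (\<epsilon> t) x ^ n)"
      by (rule integral_restrict_UNIV)
    finally show ?thesis .
  qed
  moreover have "integral\<^sup>L lborel f = integral UNIV f"
    using has_integral_integral_lborel[OF fi] by (simp add: has_integral_iff)
  ultimately show ?thesis using L unfolding f_def by simp
qed



lemma dct_at_right:
  fixes p :: real and n :: nat and \<epsilon> T :: "real \<Rightarrow> real"
  assumes p: "p \<ge> 2" and n: "n \<ge> 1" and e: "(\<epsilon> \<longlongrightarrow> 0) (at_right 0)" and T: "filterlim T at_top (at_right 0)"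
  shows "((\<lambda>t. integral {-T t..T t} (\<lambda>x. hfun p (\<epsilon> t) x ^ n)) \<longlongrightarrow> integral UNIV (\<lambda>x. hfun p 0 x ^ n)) (at_right 0)"
proof -
  have e': "((\<lambda>t. \<epsilon> (inverse t)) \<longlongrightarrow> 0) at_top" using e by (simp add: filterlim_at_right_to_top)
  have T': "filterlim (\<lambda>t. T (inverse t)) at_top at_top" using T by (simp add: filterlim_at_right_to_top)
  from dct_at_top[OF p n e' T'] show ?thesis by (simp add: filterlim_at_right_to_top)
qed

lemma hfun0_integrable: "p \<ge> 2 \<Longrightarrow> n \<ge> 1 \<Longrightarrow> (\<lambda>x. hfun p 0 x ^ n) integrable_on UNIV"
proof -
  assume p: "p \<ge> 2" and n: "n \<ge> 1"
  have "integrable lborel (\<lambda>x. hfun p 0 x ^ n)"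
  proof (rule Bochner_Integration.integrable_bound[OF integrable_w])
    show "(\<lambda>x. hfun p 0 x ^ n) \<in> borel_measurable lborel" using hfun_meas by simp
    show "AE x in lborel. norm (hfun p 0 x ^ n) \<le> norm (2 * inverse (1 + x^2))"
    proof (rule AE_I2)
      fix x :: real
      have "norm (hfun p 0 x ^ n) = hfun p 0 x ^ n" using hfun_nonneg[of p 0 x] by simp
      also have "\<dots> \<le> hfun p 0 x ^ 1"
        by (rule power_decreasing) (use n hfun_nonneg hfun_le1 in auto)
      also have "\<dots> = hfun p 0 x" by simp
      also have "\<dots> \<le> 2 * inverse (1 + x^2)" by (rule hfun_dom[OF p])
      also have "\<dots> \<le> norm (2 * inverse (1 + x^2))" by simp
      finally show "norm (hfun p 0 x ^ n) \<le> norm (2 * inverse (1 + x^2))" .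
    qed
  qed
  then show ?thesis by (rule integrable_on_lborel)
qed

lemma I_pos: "p \<ge> 2 \<Longrightarrow> n \<ge> 1 \<Longrightarrow> integral UNIV (\<lambda>x. hfun p 0 x ^ n) > 0"
proof -
  assume p: "p \<ge> 2" and n: "n \<ge> 1"
  have iU: "(\<lambda>x. hfun p 0 x ^ n) integrable_on UNIV" by (rule hfun0_integrable[OF p n])
  have i1: "(\<lambda>x. hfun p 0 x ^ n) integrable_on {-1..1}"
    by (rule integrable_on_subinterval[OF iU]) simp
  have low: "(1/2)^n \<le> hfun p 0 x ^ n" if "x \<in> {-1..1}" for x
  proof -
    have "x^2 \<le> 1" using that by (auto simp: abs_square_le_1)
    then have "(0^2 + x^2) powr (p/2) \<le> 1" using p by (simp add: powr_le1)
    moreover have "0 < 1 + (0^2 + x^2) powr (p/2)" by (simp add: add_pos_nonneg)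
    ultimately have "1/2 \<le> hfun p 0 x" unfolding hfun_def by (simp add: le_divide_eq)
    then show ?thesis by (rule power_mono) simp
  qed
  have "0 < integral {-1..1} (\<lambda>x::real. (1/2::real)^n)" by simp
  also have "\<dots> \<le> integral {-1..1} (\<lambda>x. hfun p 0 x ^ n)"
    by (rule integral_le[OF _ i1]) (use low in auto)
  also have "\<dots> \<le> integral UNIV (\<lambda>x. hfun p 0 x ^ n)"
    by (rule integral_subset_le[OF _ i1 iU]) (auto intro: zero_le_power hfun_nonneg)
  finally show ?thesis .
qed



lemma powr_to0: "e > 0 \<Longrightarrow> \<theta> > 0 \<Longrightarrow> ((\<lambda>\<delta>::real. (\<delta>*\<theta>) powr e) \<longlongrightarrow> 0) (at_right 0)"
proof -
  assume e: "e > 0" and th: "\<theta> > 0"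
  have "((\<lambda>\<delta>::real. \<delta>*\<theta>) \<longlongrightarrow> 0*\<theta>) (at_right 0)"
    by (intro tendsto_intros)
  then have l: "((\<lambda>\<delta>::real. \<delta>*\<theta>) \<longlongrightarrow> 0) (at_right 0)" by simp
  have ev: "eventually (\<lambda>\<delta>::real. 0 \<le> \<delta>*\<theta>) (at_right 0)"
    using eventually_at_right_less[of "0::real"] by eventually_elim (use th in auto)
  show ?thesis by (rule tendsto_zero_powrI[OF l tendsto_const ev e])
qed

lemma main_n:
  fixes \<nu> b \<theta> :: real and n :: nat
  assumes nu: "\<nu> \<ge> 1/2" and b: "b > 0" and th: "\<theta> > 0" and n: "n \<ge> 1"
  shows "(\<lambda>\<delta>. integral {-pi..pi} (\<lambda>l. adelta \<nu> \<delta> b \<theta> l ^ n)) \<sim>[at_right 0]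
         (\<lambda>\<delta>. (\<delta>*\<theta>) powr (2*\<nu>/(2*\<nu>+1)) * (2*pi*C_nu \<nu> * b) powr (1/(2*\<nu>+1))
               * integral UNIV (\<lambda>x. hfun (2*\<nu>+1) 0 x ^ n))"
proof -
  define p where "p = 2*\<nu>+1"
  have p2: "p \<ge> 2" and p1: "p > 1" and p0: "p > 0" using nu by (auto simp: p_def)
  have nu0: "\<nu> > 0" using nu by simp
  define K where "K = 2*pi*C_nu \<nu> * b"
  have K: "K > 0" unfolding K_def using C_nu_pos[OF nu0] b by simp
  define I where "I = integral UNIV (\<lambda>x. hfun p 0 x ^ n)"
  have I: "I > 0" unfolding I_def by (rule I_pos[OF p2 n])
  define s where "s = (\<lambda>\<delta>. (K * (\<delta>*\<theta>) powr (2*\<nu>)) powr (1/p))"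
  define J where "J = (\<lambda>\<delta>. integral {-pi/s \<delta>..pi/s \<delta>} (\<lambda>x. hfun p (\<delta>*\<theta>/s \<delta>) x ^ n))"
  define A where "A = (\<lambda>\<delta>. integral {-pi..pi} (\<lambda>l. adelta \<nu> \<delta> b \<theta> l ^ n))"
  define c0 where "c0 = 2*pi*(real n*(2*pi*b*(C_nu \<nu> * Zc)))"
  define Kp where "Kp = K powr (1/p)"
  have Kp: "Kp > 0" using K by (simp add: Kp_def)
  have evpos: "eventually (\<lambda>\<delta>::real. \<delta> > 0) (at_right 0)" by (rule eventually_at_right_less)
  have sE: "s \<delta> = Kp * (\<delta>*\<theta>) powr (2*\<nu>/p)" if "\<delta> > 0" for \<delta>
  proof -
    have a: "\<delta>*\<theta> > 0" using that th by simp
    have "s \<delta> = K powr (1/p) * ((\<delta>*\<theta>) powr (2*\<nu>)) powr (1/p)"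
      unfolding s_def using K a by (simp add: powr_mult)
    also have "((\<delta>*\<theta>) powr (2*\<nu>)) powr (1/p) = (\<delta>*\<theta>) powr (2*\<nu>/p)" by (simp add: powr_powr)
    finally show ?thesis by (simp add: Kp_def)
  qed
  have spos: "s \<delta> > 0" if "\<delta> > 0" for \<delta> using sE[OF that] Kp that th by simp
  have epsE: "\<delta>*\<theta>/s \<delta> = (\<delta>*\<theta>) powr (1/p) / Kp" if "\<delta> > 0" for \<delta>
  proof -
    have a: "\<delta>*\<theta> > 0" using that th by simp
    have "(\<delta>*\<theta>) powr (1/p) = (\<delta>*\<theta>) powr (1 - 2*\<nu>/p)" using p0 by (simp add: p_def field_simps)
    also have "\<dots> = (\<delta>*\<theta>) / (\<delta>*\<theta>) powr (2*\<nu>/p)" using a by (simp add: powr_diff)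
    finally show ?thesis using sE[OF that] Kp a by (simp add: field_simps)
  qed
  have errE: "(\<delta>*\<theta>) powr (2*\<nu>) / s \<delta> = (\<delta>*\<theta>) powr (2*\<nu> - 2*\<nu>/p) / Kp" if "\<delta> > 0" for \<delta>
  proof -
    have a: "\<delta>*\<theta> > 0" using that th by simp
    show ?thesis using sE[OF that] Kp a by (simp add: powr_diff field_simps)
  qed
  have AJ: "\<bar>A \<delta> - s \<delta> * J \<delta>\<bar> \<le> c0 * (\<delta>*\<theta>) powr (2*\<nu>)" if "\<delta> > 0" for \<delta>
  proof -
    have a: "\<delta>*\<theta> > 0" using that th by simp
    have "integral {-pi..pi} (\<lambda>l. phi (2*pi*b*gstar \<nu> (\<delta>*\<theta>) l) ^ n) = s \<delta> * J \<delta>"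
      unfolding J_def p_def
      by (rule subst_main[OF nu0 a b]) (simp add: s_def K_def p_def)
    then show ?thesis using a_approx[OF nu b a, of n] unfolding A_def c0_def by (simp add: mult_ac)
  qed
  have s0: "(s \<longlongrightarrow> 0) (at_right 0)"
  proof -
    have "((\<lambda>\<delta>. Kp * (\<delta>*\<theta>) powr (2*\<nu>/p)) \<longlongrightarrow> Kp * 0) (at_right 0)"
      by (intro tendsto_mult tendsto_const powr_to0) (use nu0 p0 th in auto)
    then show ?thesis using tendsto_cong[of s "\<lambda>\<delta>. Kp * (\<delta>*\<theta>) powr (2*\<nu>/p)"] evpos sE
      by (simp add: eventually_mono)
  qed
  have T: "filterlim (\<lambda>\<delta>. pi / s \<delta>) at_top (at_right 0)"
    by (rule LIM_at_top_divide[OF tendsto_const _ s0]) (use evpos spos in \<open>auto elim: eventually_mono\<close>)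
  have T': "filterlim (\<lambda>\<delta>. -(-pi / s \<delta>)) at_top (at_right 0)" using T by simp
  have e0: "((\<lambda>\<delta>. \<delta>*\<theta>/s \<delta>) \<longlongrightarrow> 0) (at_right 0)"
  proof -
    have "((\<lambda>\<delta>. (\<delta>*\<theta>) powr (1/p) / Kp) \<longlongrightarrow> 0 / Kp) (at_right 0)"
      by (intro tendsto_divide tendsto_const powr_to0) (use Kp p0 th in auto)
    then show ?thesis using tendsto_cong[of "\<lambda>\<delta>. \<delta>*\<theta>/s \<delta>" "\<lambda>\<delta>. (\<delta>*\<theta>) powr (1/p) / Kp"] evpos epsE
      by (simp add: eventually_mono)
  qed
  have JI: "(J \<longlongrightarrow> I) (at_right 0)"
  proof -
    have "((\<lambda>t. integral {-(pi / s t)..pi / s t} (\<lambda>x. hfun p (t*\<theta>/s t) x ^ n)) \<longlongrightarrow> I) (at_right 0)"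
      unfolding I_def by (rule dct_at_right[OF p2 n e0 T])
    then show ?thesis unfolding J_def by simp
  qed
  have err0: "((\<lambda>\<delta>. (A \<delta> - s \<delta> * J \<delta>) / (s \<delta> * I)) \<longlongrightarrow> 0) (at_right 0)"
  proof (rule Lim_null_comparison)
    have ee: "2*\<nu> - 2*\<nu>/p > 0"
    proof -
      have "2*\<nu>/p < 2*\<nu>" using p1 nu0 by (simp add: divide_less_eq)
      then show ?thesis by simp
    qed
    show "((\<lambda>\<delta>. c0 / I * ((\<delta>*\<theta>) powr (2*\<nu> - 2*\<nu>/p) / Kp)) \<longlongrightarrow> 0) (at_right 0)"
      using tendsto_mult[OF tendsto_const[of "c0/I"] tendsto_divide[OF powr_to0[OF ee th] tendsto_const[of Kp]]] Kp
      by simp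
    show "\<forall>\<^sub>F \<delta> in at_right 0. norm ((A \<delta> - s \<delta> * J \<delta>) / (s \<delta> * I)) \<le> c0 / I * ((\<delta>*\<theta>) powr (2*\<nu> - 2*\<nu>/p) / Kp)"
      using evpos
    proof eventually_elim
      case (elim \<delta>)
      have sp: "s \<delta> > 0" by (rule spos[OF elim])
      have "norm ((A \<delta> - s \<delta> * J \<delta>) / (s \<delta> * I)) = \<bar>A \<delta> - s \<delta> * J \<delta>\<bar> / (s \<delta> * I)"
        using sp I by simp
      also have "\<dots> \<le> c0 * (\<delta>*\<theta>) powr (2*\<nu>) / (s \<delta> * I)"
        by (rule divide_right_mono[OF AJ[OF elim]]) (use sp I in simp)
      also have "\<dots> = c0 / I * ((\<delta>*\<theta>) powr (2*\<nu>) / s \<delta>)" by simp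
      also have "\<dots> = c0 / I * ((\<delta>*\<theta>) powr (2*\<nu> - 2*\<nu>/p) / Kp)" by (simp add: errE[OF elim])
      finally show ?case .
    qed
  qed
  have rat: "((\<lambda>\<delta>. A \<delta> / (s \<delta> * I)) \<longlongrightarrow> 1) (at_right 0)"
  proof -
    have "((\<lambda>\<delta>. J \<delta> / I + (A \<delta> - s \<delta> * J \<delta>) / (s \<delta> * I)) \<longlongrightarrow> I / I + 0) (at_right 0)"
      by (intro tendsto_add tendsto_divide JI tendsto_const err0) (use I in simp)
    moreover have "eventually (\<lambda>\<delta>. J \<delta> / I + (A \<delta> - s \<delta> * J \<delta>) / (s \<delta> * I) = A \<delta> / (s \<delta> * I)) (at_right 0)"
      using evpos
    proof eventually_elim
      case (elim \<delta>)
      have sp: "s \<delta> > 0" by (rule spos[OF elim])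
      show ?case using sp I by (simp add: field_simps)
    qed
    ultimately show ?thesis using I by (simp add: tendsto_cong)
  qed
  have tg: "eventually (\<lambda>\<delta>. s \<delta> * I = (\<delta>*\<theta>) powr (2*\<nu>/(2*\<nu>+1)) * (2*pi*C_nu \<nu> * b) powr (1/(2*\<nu>+1))
               * integral UNIV (\<lambda>x. hfun (2*\<nu>+1) 0 x ^ n)) (at_right 0)"
    using evpos
  proof eventually_elim
    case (elim \<delta>)
    show ?case using sE[OF elim] by (simp add: I_def Kp_def K_def p_def mult_ac)
  qed
  have "A \<sim>[at_right 0] (\<lambda>\<delta>. s \<delta> * I)" by (rule asymp_equivI'[OF rat])
  also have "(\<lambda>\<delta>. s \<delta> * I) \<sim>[at_right 0] (\<lambda>\<delta>. (\<delta>*\<theta>) powr (2*\<nu>/(2*\<nu>+1)) * (2*pi*C_nu \<nu> * b) powr (1/(2*\<nu>+1))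
               * integral UNIV (\<lambda>x. hfun (2*\<nu>+1) 0 x ^ n))"
    by (rule asymp_equiv_refl_ev[OF tg])
  finally show ?thesis unfolding A_def .
qed



lemma hfun0_abs: "hfun p 0 x = 1 / (1 + \<bar>x\<bar> powr p)"
proof (cases "x = 0")
  case True then show ?thesis by (simp add: hfun_def)
next
  case False
  have e: "0^2 + x^2 = \<bar>x\<bar> powr 2" using False by (simp add: powr_realpow)
  have "(0^2 + x^2) powr (p/2) = \<bar>x\<bar> powr p" unfolding e powr_powr by simp
  then show ?thesis by (simp add: hfun_def)
qed

theorem lemma5p4:
  fixes \<nu> b \<theta> :: real
  assumes "\<nu> \<ge> 1/2" and "b > 0" and "\<theta> > 0"
  shows "((\<lambda>\<delta>. integral {-pi..pi} (\<lambda>l. adelta \<nu> \<delta> b \<theta> l)) \<sim>[at_right 0]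
           (\<lambda>\<delta>. (\<delta>*\<theta>) powr (2*\<nu>/(2*\<nu>+1)) * (2*pi*C_nu \<nu> * b) powr (1/(2*\<nu>+1))
                 * integral UNIV (\<lambda>x::real. 1 / (1 + \<bar>x\<bar> powr (2*\<nu>+1))))) \<and>
         ((\<lambda>\<delta>. integral {-pi..pi} (\<lambda>l. (adelta \<nu> \<delta> b \<theta> l)^2)) \<sim>[at_right 0]
           (\<lambda>\<delta>. (\<delta>*\<theta>) powr (2*\<nu>/(2*\<nu>+1)) * (2*pi*C_nu \<nu> * b) powr (1/(2*\<nu>+1))
                 * integral UNIV (\<lambda>x::real. 1 / (1 + \<bar>x\<bar> powr (2*\<nu>+1))^2)))"
proof
  show "(\<lambda>\<delta>. integral {-pi..pi} (\<lambda>l. adelta \<nu> \<delta> b \<theta> l)) \<sim>[at_right 0]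
           (\<lambda>\<delta>. (\<delta>*\<theta>) powr (2*\<nu>/(2*\<nu>+1)) * (2*pi*C_nu \<nu> * b) powr (1/(2*\<nu>+1))
                 * integral UNIV (\<lambda>x::real. 1 / (1 + \<bar>x\<bar> powr (2*\<nu>+1))))"
    using main_n[OF assms, of 1] by (simp add: hfun0_abs)
  show "(\<lambda>\<delta>. integral {-pi..pi} (\<lambda>l. (adelta \<nu> \<delta> b \<theta> l)^2)) \<sim>[at_right 0]
           (\<lambda>\<delta>. (\<delta>*\<theta>) powr (2*\<nu>/(2*\<nu>+1)) * (2*pi*C_nu \<nu> * b) powr (1/(2*\<nu>+1))
                 * integral UNIV (\<lambda>x::real. 1 / (1 + \<bar>x\<bar> powr (2*\<nu>+1))^2))"
    using main_n[OF assms, of 2] by (simp add: hfun0_abs power_one_over)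
qed

end
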